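(* There is an absolute constant $c>0$ such that for every $n\ge 1$ and every algorithm $M$ for uniform facility location that outputs the set of chosen facilities and is $1$-differentially private with respect to the demand set, there exists an instance (a metric space $(V,d)$ on $n$ points, a facility cost $f>0$, and a demand set $D\subseteq V$) on which $\mathbb{E}[\mathrm{cost}(M)]\ge c\sqrt n\cdot\mathrm{OPT}$.
   Context: Uniform facility location: given a metric $(V,d)$, a uniform facility opening cost $f$, and a private demand set $D\subseteq V$, a solution is a nonempty set $F\subseteq V$ of facilities with cost $\sum_{v\in D}\min_{u\in F}d(v,u)+f\,|F|$; $\mathrm{OPT}$ is the minimum cost. $M$ is $1$-differentially private if, for fixed $(V,d,f)$, for all demand sets $D,D'$ with symmetric difference one and all sets $\mathcal{O}$ of outputs, $\Pr[M(D)\in\mathcal{O}]\le e\cdot\Pr[M(D')\in\mathcal{O}]$. *)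

theory Defs
  imports "HOL-Probability.Probability"
begin

text \<open>Points of an n-point metric space are the naturals {..<n}.\<close>

definition is_metric_on :: "nat set \<Rightarrow> (nat \<Rightarrow> nat \<Rightarrow> real) \<Rightarrow> bool" where
  "is_metric_on V d \<longleftrightarrow>
     (\<forall>x\<in>V. d x x = 0) \<and>
     (\<forall>x\<in>V. \<forall>y\<in>V. x \<noteq> y \<longrightarrow> d x y > 0) \<and>
     (\<forall>x\<in>V. \<forall>y\<in>V. d x y = d y x) \<and>
     (\<forall>x\<in>V. \<forall>y\<in>V. \<forall>z\<in>V. d x z \<le> d x y + d y z)"

definition feasible_sols :: "nat set \<Rightarrow> nat set set" where
  "feasible_sols V = {F. F \<noteq> {} \<and> F \<subseteq> V}"

definition ufl_cost :: "(nat \<Rightarrow> nat \<Rightarrow> real) \<Rightarrow> real \<Rightarrow> nat set \<Rightarrow> nat set \<Rightarrow> real" where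
  "ufl_cost d f D F = (\<Sum>v\<in>D. Min (d v ` F)) + f * real (card F)"

definition ufl_OPT :: "nat set \<Rightarrow> (nat \<Rightarrow> nat \<Rightarrow> real) \<Rightarrow> real \<Rightarrow> nat set \<Rightarrow> real" where
  "ufl_OPT V d f D = Min (ufl_cost d f D ` feasible_sols V)"

definition diff_private :: "real \<Rightarrow> nat set \<Rightarrow> (nat set \<Rightarrow> 'b pmf) \<Rightarrow> bool" where
  "diff_private \<epsilon> V M \<longleftrightarrow>
     (\<forall>D D' S. D \<subseteq> V \<longrightarrow> D' \<subseteq> V \<longrightarrow> card ((D - D') \<union> (D' - D)) = 1 \<longrightarrow>
        measure_pmf.prob (M D) S \<le> exp \<epsilon> * measure_pmf.prob (M D') S)"

end

theory Submission
  imports Defs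
begin

lemma prob_as_sum:
  assumes "set_pmf P \<subseteq> Pow V" "finite V"
  shows "measure_pmf.prob P A = (\<Sum>F\<in>Pow V. indicator A F * pmf P F)"
proof -
  have "measure_pmf.prob P A = measure_pmf.expectation P (indicator A)" by simp
  also have "\<dots> = (\<Sum>F\<in>Pow V. indicator A F * pmf P F)"
    by (rule integral_measure_pmf_real) (use assms in auto)
  finally show ?thesis .
qed

theorem mainTheorem5:
  "\<exists>c::real. c > 0 \<and>
    (\<forall>(n::nat) (M :: (nat \<Rightarrow> nat \<Rightarrow> real) \<Rightarrow> real \<Rightarrow> nat set \<Rightarrow> nat set pmf).
       n \<ge> 1 \<longrightarrow>
       (\<forall>d f D. is_metric_on {..<n} d \<longrightarrow> f > 0 \<longrightarrow> D \<subseteq> {..<n} \<longrightarrow>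
           set_pmf (M d f D) \<subseteq> feasible_sols {..<n}) \<longrightarrow>
       (\<forall>d f. is_metric_on {..<n} d \<longrightarrow> f > 0 \<longrightarrow> diff_private 1 {..<n} (M d f)) \<longrightarrow>
       (\<exists>d f D. is_metric_on {..<n} d \<and> f > 0 \<and> D \<subseteq> {..<n} \<and>
          measure_pmf.expectation (M d f D) (ufl_cost d f D)
            \<ge> c * sqrt (real n) * ufl_OPT {..<n} d f D))"
proof (intro exI[of _ "1/(2*exp 1)"] conjI allI impI)
  show "(0::real) < 1/(2*exp 1)" by simp
  fix n :: nat and M :: "(nat \<Rightarrow> nat \<Rightarrow> real) \<Rightarrow> real \<Rightarrow> nat set \<Rightarrow> nat set pmf"
  assume n1: "n \<ge> 1"
    and H1: "\<forall>d f D. is_metric_on {..<n} d \<longrightarrow> f > 0 \<longrightarrow> D \<subseteq> {..<n} \<longrightarrow>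
           set_pmf (M d f D) \<subseteq> feasible_sols {..<n}"
    and H2: "\<forall>d f. is_metric_on {..<n} d \<longrightarrow> f > 0 \<longrightarrow> diff_private 1 {..<n} (M d f)"
  define V where "V = {..<n::nat}"
  define d :: "nat \<Rightarrow> nat \<Rightarrow> real" where "d = (\<lambda>x y. if x = y then 0 else 1)"
  define f :: real where "f = 1 / real n"
  define c :: real where "c = 1/(2*exp 1)"
  have fV: "finite V" by (simp add: V_def)
  have met: "is_metric_on V d" unfolding is_metric_on_def d_def by auto
  have fpos: "f > 0" using n1 by (simp add: f_def)
  have snn: "sqrt (real n) \<le> real n"
  proof -
    have s1: "1 \<le> sqrt (real n)" using n1 by simp
    have "sqrt (real n) * 1 \<le> sqrt (real n) * sqrt (real n)"
      using s1 by (intro mult_left_mono) auto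
    thus ?thesis by simp
  qed
  have fsqrt: "f * sqrt (real n) \<le> 1"
    using snn n1 by (simp add: f_def divide_le_eq)
  have cpos: "c > 0" by (simp add: c_def)
  have feasPow: "feasible_sols V \<subseteq> Pow V" by (auto simp: feasible_sols_def)
  have finfeas: "finite (feasible_sols V)" using feasPow fV by (meson finite_Pow_iff finite_subset)
  have zeroV: "0 \<in> V" using n1 by (simp add: V_def)
  have OPT_le: "ufl_OPT V d f D \<le> ufl_cost d f D F" if "F \<in> feasible_sols V" for D F
    unfolding ufl_OPT_def using finfeas that by (intro Min_le) auto
  have supp: "set_pmf (M d f D) \<subseteq> Pow V" if "D \<subseteq> V" for D
    using H1 met fpos that feasPow unfolding V_def by blast
  have dp: "diff_private 1 V (M d f)" using H2 met fpos unfolding V_def by blast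
  define P where "P = M d f {}"
  define p where "p v = measure_pmf.prob P {F. v \<in> F}" for v
  have suppP: "set_pmf P \<subseteq> Pow V" using supp[of "{}"] by (simp add: P_def)
  have EP: "measure_pmf.expectation P (ufl_cost d f {}) = f * (\<Sum>v\<in>V. p v)"
  proof -
    have "measure_pmf.expectation P (ufl_cost d f {}) = (\<Sum>F\<in>Pow V. ufl_cost d f {} F * pmf P F)"
      by (rule integral_measure_pmf_real) (use suppP fV in auto)
    also have "\<dots> = (\<Sum>F\<in>Pow V. f * ((\<Sum>v\<in>V. indicator {F. v \<in> F} F) * pmf P F))"
    proof (rule sum.cong)
      fix F assume "F \<in> Pow V"
      have "(\<Sum>v\<in>V. indicator {F. v \<in> F} F :: real) = (\<Sum>v\<in>V. indicator F v)"
        by (simp add: indicator_def)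
      also have "\<dots> = real (card (V \<inter> F))"
        using sum.inter_restrict[OF fV, of "\<lambda>_. 1::real" F] by (simp add: indicator_def of_bool_def)
      also have "V \<inter> F = F" using \<open>F \<in> Pow V\<close> by auto
      finally show "ufl_cost d f {} F * pmf P F = f * ((\<Sum>v\<in>V. indicator {F. v \<in> F} F) * pmf P F)"
        by (simp add: ufl_cost_def)
    qed simp
    also have "\<dots> = f * (\<Sum>v\<in>V. \<Sum>F\<in>Pow V. indicator {F. v \<in> F} F * pmf P F)"
    proof -
      have "(\<Sum>F\<in>Pow V. f * ((\<Sum>v\<in>V. indicator {F. v \<in> F} F) * pmf P F))
          = f * (\<Sum>F\<in>Pow V. \<Sum>v\<in>V. indicator {F. v \<in> F} F * pmf P F)"
        by (simp add: sum_distrib_left sum_distrib_right)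
      also have "(\<Sum>F\<in>Pow V. \<Sum>v\<in>V. indicator {F. v \<in> F} F * pmf P F)
          = (\<Sum>v\<in>V. \<Sum>F\<in>Pow V. indicator {F. v \<in> F} F * pmf P F)"
        by (rule sum.swap)
      finally show ?thesis .
    qed
    also have "\<dots> = f * (\<Sum>v\<in>V. p v)"
      unfolding p_def using prob_as_sum[OF suppP fV] by simp
    finally show ?thesis .
  qed
  show "\<exists>d f D. is_metric_on {..<n} d \<and> f > 0 \<and> D \<subseteq> {..<n} \<and>
          measure_pmf.expectation (M d f D) (ufl_cost d f D)
            \<ge> 1/(2*exp 1) * sqrt (real n) * ufl_OPT {..<n} d f D"
  proof (cases "(\<Sum>v\<in>V. p v) \<ge> real n * c")
    case True
    have opt: "ufl_OPT V d f {} \<le> f"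
      using OPT_le[of "{0}" "{}"] zeroV by (simp add: feasible_sols_def ufl_cost_def)
    have "c * sqrt (real n) * ufl_OPT V d f {} \<le> c * sqrt (real n) * f"
      using opt cpos by (intro mult_left_mono) auto
    also have "\<dots> \<le> c * real n * f" using snn cpos fpos
      by (intro mult_right_mono mult_left_mono) auto
    also have "\<dots> = f * (real n * c)" by (simp add: ac_simps)
    also have "\<dots> \<le> f * (\<Sum>v\<in>V. p v)" using True fpos
      by (intro mult_left_mono) auto
    also have "\<dots> = measure_pmf.expectation (M d f {}) (ufl_cost d f {})"
      using EP by (simp add: P_def)
    finally have fin: "c * sqrt (real n) * ufl_OPT V d f {} \<le> measure_pmf.expectation (M d f {}) (ufl_cost d f {})" .
    have "is_metric_on {..<n} d" using met by (simp add: V_def)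
    moreover have "{} \<subseteq> {..<n::nat}" by simp
    moreover note fpos
    moreover have "1/(2*exp 1) * sqrt (real n) * ufl_OPT {..<n} d f {} \<le> measure_pmf.expectation (M d f {}) (ufl_cost d f {})"
      using fin by (simp add: V_def c_def)
    ultimately show ?thesis by blast
  next
    case False
    obtain v where vV: "v \<in> V" and pv: "p v < c"
    proof (rule ccontr)
      assume "\<not> thesis"
      hence "\<forall>v\<in>V. c \<le> p v" using that by (meson not_less)
      hence "(\<Sum>v\<in>V. c) \<le> (\<Sum>v\<in>V. p v)" by (intro sum_mono) auto
      thus False using False by (simp add: V_def mult.commute)
    qed
    define P' where "P' = M d f {v}"
    have suppP': "set_pmf P' \<subseteq> Pow V" using supp[of "{v}"] vV by (simp add: P'_def)
    have "card (({v} - {}) \<union> ({} - {v})) = 1" by simp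
    hence dpv: "measure_pmf.prob P' {F. v \<in> F} \<le> exp 1 * p v"
      using dp vV unfolding diff_private_def P'_def p_def P_def by blast
    have ec: "exp 1 * c = 1/2" by (simp add: c_def)
    have half: "measure_pmf.prob P' {F. v \<in> F} < 1/2"
      using dpv pv ec by (smt (verit) exp_gt_zero mult_strict_left_mono)
    have compl: "measure_pmf.prob P' {F. v \<notin> F} = 1 - measure_pmf.prob P' {F. v \<in> F}"
    proof -
      have e: "space (measure_pmf P') - {F. v \<in> F} = {F. v \<notin> F}" by auto
      show ?thesis using measure_pmf.prob_compl[of "{F. v \<in> F}" P'] unfolding e by simp
    qed
    have "measure_pmf.prob P' {F. v \<notin> F} = measure_pmf.expectation P' (indicator {F. v \<notin> F})"
      by simp
    also have "\<dots> \<le> measure_pmf.expectation P' (ufl_cost d f {v})"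
    proof (rule integral_mono_AE)
      have fin: "finite (set_pmf P')" using suppP' fV by (meson finite_Pow_iff finite_subset)
      show "integrable (measure_pmf P') (indicator {F. v \<notin> F} :: _ \<Rightarrow> real)"
        using fin by (rule integrable_measure_pmf_finite)
      show "integrable (measure_pmf P') (ufl_cost d f {v})"
        using fin by (rule integrable_measure_pmf_finite)
      show "AE F in measure_pmf P'. indicator {F. v \<notin> F} F \<le> ufl_cost d f {v} F"
      proof (rule AE_pmfI)
        fix F assume FP: "F \<in> set_pmf P'"
        hence Ff: "F \<in> feasible_sols V" using H1 met fpos vV unfolding P'_def V_def by blast
        hence Fne: "F \<noteq> {}" and FV: "F \<subseteq> V" by (auto simp: feasible_sols_def)
        have finF: "finite F" using FV fV finite_subset by blast
        have m0: "Min (d v ` F) \<ge> 0" using finF Fne by (subst Min_ge_iff) (auto simp: d_def)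
        have m1: "Min (d v ` F) \<ge> 1" if "v \<notin> F"
          using finF Fne that by (subst Min_ge_iff) (auto simp: d_def)
        show "indicator {F. v \<notin> F} F \<le> ufl_cost d f {v} F"
        proof -
          have "0 \<le> f * real (card F)" using fpos by simp
          thus ?thesis using m0 m1 by (auto simp: ufl_cost_def indicator_def)
        qed
      qed
    qed
    finally have E1: "1/2 \<le> measure_pmf.expectation P' (ufl_cost d f {v})"
      using compl half by linarith
    have opt: "ufl_OPT V d f {v} \<le> f"
      using OPT_le[of "{v}" "{v}"] vV by (simp add: feasible_sols_def ufl_cost_def d_def)
    have "c * sqrt (real n) * ufl_OPT V d f {v} \<le> c * (sqrt (real n) * f)"
      using opt cpos by (simp add: mult.assoc mult_left_mono)
    also have "\<dots> \<le> c" using fsqrt cpos by (simp add: mult.commute mult_left_le)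
    also have "c \<le> 1/2" by (simp add: c_def)
    finally have "c * sqrt (real n) * ufl_OPT V d f {v} \<le> measure_pmf.expectation P' (ufl_cost d f {v})"
      using E1 by linarith
    thus ?thesis using met fpos vV unfolding V_def P'_def c_def
      by (intro exI[of _ d] exI[of _ f] exI[of _ "{v}"]) auto
  qed
qed

end
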